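(* A ternary matrix $M$ is a (strong) lonesum matrix if and only if each of its $2\times 2$ submatrices is equivalent to a matrix of one of the forms $$\begin{pmatrix}2&2\\c&d\end{pmatrix},\quad \begin{pmatrix}2&b\\2&d\end{pmatrix},\quad \begin{pmatrix}2&b\\c&0\end{pmatrix},\quad \begin{pmatrix}a&b\\0&0\end{pmatrix},\quad \begin{pmatrix}a&0\\c&0\end{pmatrix},$$ where $a,b,c,d\in\{0,1,2\}$.
   Context: A ternary matrix is a matrix with all entries in $\{0,1,2\}$. A ternary $m\times n$ matrix $M$ is a (strong) lonesum matrix if no other ternary $m\times n$ matrix has the same row sums and the same column sums as $M$. A $2\times 2$ submatrix is the matrix formed by the entries in the intersection of two chosen rows and two chosen columns. Two matrices are equivalent if one can be obtained from the other by permuting rows and permuting columns. *)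

theory Defs
  imports Main "HOL-Combinatorics.Permutations"
begin

text \<open>An m x n matrix is represented as a function nat => nat => nat; only the
entries with row index < m and column index < n are relevant.\<close>

definition ternary :: "nat \<Rightarrow> nat \<Rightarrow> (nat \<Rightarrow> nat \<Rightarrow> nat) \<Rightarrow> bool" where
  "ternary m n M \<longleftrightarrow> (\<forall>i<m. \<forall>j<n. M i j \<in> {0, 1, 2})"

definition row_sum :: "nat \<Rightarrow> (nat \<Rightarrow> nat \<Rightarrow> nat) \<Rightarrow> nat \<Rightarrow> nat" where
  "row_sum n M i = (\<Sum>j<n. M i j)"

definition col_sum :: "nat \<Rightarrow> (nat \<Rightarrow> nat \<Rightarrow> nat) \<Rightarrow> nat \<Rightarrow> nat" where
  "col_sum m M j = (\<Sum>i<m. M i j)"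

definition same_matrix :: "nat \<Rightarrow> nat \<Rightarrow> (nat \<Rightarrow> nat \<Rightarrow> nat) \<Rightarrow> (nat \<Rightarrow> nat \<Rightarrow> nat) \<Rightarrow> bool" where
  "same_matrix m n A B \<longleftrightarrow> (\<forall>i<m. \<forall>j<n. A i j = B i j)"

definition lonesum :: "nat \<Rightarrow> nat \<Rightarrow> (nat \<Rightarrow> nat \<Rightarrow> nat) \<Rightarrow> bool" where
  "lonesum m n M \<longleftrightarrow> ternary m n M \<and>
     (\<forall>M'. ternary m n M' \<and> (\<forall>i<m. row_sum n M' i = row_sum n M i)
            \<and> (\<forall>j<n. col_sum m M' j = col_sum m M j) \<longrightarrow> same_matrix m n M' M)"

definition mat_equiv :: "nat \<Rightarrow> nat \<Rightarrow> (nat \<Rightarrow> nat \<Rightarrow> nat) \<Rightarrow> (nat \<Rightarrow> nat \<Rightarrow> nat) \<Rightarrow> bool" where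
  "mat_equiv m n A B \<longleftrightarrow> (\<exists>\<sigma> \<tau>. \<sigma> permutes {..<m} \<and> \<tau> permutes {..<n} \<and>
       (\<forall>i<m. \<forall>j<n. B i j = A (\<sigma> i) (\<tau> j)))"

definition submat2 :: "(nat \<Rightarrow> nat \<Rightarrow> nat) \<Rightarrow> nat \<Rightarrow> nat \<Rightarrow> nat \<Rightarrow> nat \<Rightarrow> (nat \<Rightarrow> nat \<Rightarrow> nat)" where
  "submat2 M i1 i2 j1 j2 = (\<lambda>r c. M (if r = 0 then i1 else i2) (if c = 0 then j1 else j2))"

definition mat2 :: "nat \<Rightarrow> nat \<Rightarrow> nat \<Rightarrow> nat \<Rightarrow> (nat \<Rightarrow> nat \<Rightarrow> nat)" where
  "mat2 a b c d = (\<lambda>r s. if r = 0 then (if s = 0 then a else b) else (if s = 0 then c else d))"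

definition allowed_form :: "(nat \<Rightarrow> nat \<Rightarrow> nat) \<Rightarrow> bool" where
  "allowed_form B \<longleftrightarrow> (\<exists>a b c d. a \<in> {0,1,2} \<and> b \<in> {0,1,2} \<and> c \<in> {0,1,2} \<and> d \<in> {0,1,2} \<and>
     (same_matrix 2 2 B (mat2 2 2 c d) \<or> same_matrix 2 2 B (mat2 2 b 2 d) \<or>
      same_matrix 2 2 B (mat2 2 b c 0) \<or> same_matrix 2 2 B (mat2 a b 0 0) \<or>
      same_matrix 2 2 B (mat2 a 0 c 0)))"

end

theory Submission
  imports Defs
begin

definition noswitch :: "nat \<Rightarrow> nat \<Rightarrow> (nat \<Rightarrow> nat \<Rightarrow> nat) \<Rightarrow> bool" where
 "noswitch m n M \<longleftrightarrow> (\<forall>r r' c c'. r<m \<longrightarrow> r'<m \<longrightarrow> c<n \<longrightarrow> c'<n \<longrightarrow> r\<noteq>r' \<longrightarrow> c\<noteq>c' \<longrightarrow>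
     \<not>(M r c \<le> 1 \<and> M r' c' \<le> 1 \<and> 1 \<le> M r c' \<and> 1 \<le> M r' c))"

lemma sum_gt:
  fixes f g :: "'a \<Rightarrow> nat"
  assumes "finite A" "sum f A = sum g A" "x \<in> A" "f x < g x"
  shows "\<exists>y\<in>A. g y < f y"
proof (rule ccontr)
  assume "\<not> ?thesis"
  hence "\<forall>y\<in>A. f y \<le> g y" by auto
  hence "sum f A < sum g A" using assms by (intro sum_strict_mono_ex1) auto
  thus False using assms by simp
qed

lemma key:
  assumes tM: "ternary m n M" and tK: "ternary m n K"
   and rows: "\<forall>i<m. row_sum n K i = row_sum n M i"
   and cols: "\<forall>j<n. col_sum m K j = col_sum m M j"
   and ns: "noswitch m n M"
   and P_def: "P = {r. r<m \<and> (\<exists>c<n. M r c < K r c)}"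
   and rP: "r \<in> P" and mx: "\<forall>x\<in>P. row_sum n M x \<le> row_sum n M r"
   and c: "c<n" "M r c < K r c"
  shows "\<exists>r'<m. r' \<noteq> r \<and> K r' c < M r' c \<and> (\<forall>x<n. M r' x = M r x) \<and> M r c = 1 \<and> r' \<in> P"
proof -
  have rm: "r < m" using rP P_def by auto
  have "sum (\<lambda>i. M i c) {..<m} = sum (\<lambda>i. K i c) {..<m}" using cols c by (simp add: col_sum_def)
  then obtain r' where r': "r' < m" "K r' c < M r' c"
    using sum_gt[of "{..<m}" "\<lambda>i. M i c" "\<lambda>i. K i c" r] rm c by auto
  have rr: "r' \<noteq> r" using r' c by auto
  have "sum (K r') {..<n} = sum (M r') {..<n}" using rows r' by (simp add: row_sum_def)
  then obtain c' where c': "c' < n" "M r' c' < K r' c'"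
    using sum_gt[of "{..<n}" "K r'" "M r'" c] r' c by auto
  hence r'P: "r' \<in> P" using P_def r' by auto
  have "K r c \<in> {0,1,2}" using tK rm c unfolding ternary_def by blast
  hence Mrc: "M r c \<le> 1" using c by auto
  have Mr'c: "1 \<le> M r' c" using r' by simp
  have dom: "\<forall>x<n. M r x \<le> M r' x"
  proof (intro allI impI, rule ccontr)
    fix x assume x: "x<n" "\<not> M r x \<le> M r' x"
    have "M r x \<in> {0,1,2}" using tM rm x unfolding ternary_def by blast
    hence a: "M r' x \<le> 1" using x by auto
    have b: "1 \<le> M r x" using x by simp
    have xc: "x \<noteq> c" using x Mrc Mr'c by auto
    have "\<not>(M r c \<le> 1 \<and> M r' x \<le> 1 \<and> 1 \<le> M r x \<and> 1 \<le> M r' c)"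
      using ns rm r' rr c x xc unfolding noswitch_def by metis
    thus False using a b Mrc Mr'c by blast
  qed
  have eq: "\<forall>x<n. M r' x = M r x"
  proof (rule ccontr)
    assume "\<not> ?thesis"
    then obtain x where "x<n" "M r x < M r' x" using dom by (metis le_neq_implies_less)
    hence "sum (M r) {..<n} < sum (M r') {..<n}" using dom by (intro sum_strict_mono_ex1) auto
    moreover have "row_sum n M r' \<le> row_sum n M r" using mx r'P by auto
    ultimately show False by (simp add: row_sum_def)
  qed
  have "M r c = 1" using eq c Mrc Mr'c by (metis le_antisym)
  show ?thesis using r' rr eq \<open>M r c = 1\<close> r'P by blast
qed

lemma ns_lonesum:
  assumes tM: "ternary m n M" and ns: "noswitch m n M"
  shows "lonesum m n M"
  unfolding lonesum_def
proof (intro conjI allI impI)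
  show "ternary m n M" by fact
  fix K assume H: "ternary m n K \<and> (\<forall>i<m. row_sum n K i = row_sum n M i)
            \<and> (\<forall>j<n. col_sum m K j = col_sum m M j)"
  hence tK: "ternary m n K" and rows: "\<forall>i<m. row_sum n K i = row_sum n M i"
     and cols: "\<forall>j<n. col_sum m K j = col_sum m M j" by auto
  show "same_matrix m n K M" unfolding same_matrix_def
  proof (rule ccontr)
    assume "\<not> (\<forall>i<m. \<forall>j<n. K i j = M i j)"
    then obtain i j where ij: "i<m" "j<n" "K i j \<noteq> M i j" by blast
    define P where "P = {r. r<m \<and> (\<exists>c<n. M r c < K r c)}"
    have "i \<in> P"
    proof (cases "M i j < K i j")
      case True thus ?thesis using ij P_def by auto
    next
      case False
      hence "K i j < M i j" using ij by auto
      moreover have "sum (K i) {..<n} = sum (M i) {..<n}" using rows ij by (simp add: row_sum_def)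
      ultimately obtain y where "y<n" "M i y < K i y"
        using sum_gt[of "{..<n}" "K i" "M i" j] ij by auto
      thus ?thesis using ij P_def by auto
    qed
    hence Pne: "P \<noteq> {}" by auto
    have finP: "finite P" by (rule finite_subset[of _ "{..<m}"]) (auto simp: P_def)
    define s where "s = Max ((row_sum n M) ` P)"
    have "s \<in> (row_sum n M) ` P" unfolding s_def using finP Pne by (intro Max_in) auto
    then obtain r where rP: "r \<in> P" and rs: "row_sum n M r = s" by auto
    have mx: "\<forall>x\<in>P. row_sum n M x \<le> row_sum n M r"
      using rs finP unfolding s_def by auto
    obtain c where c: "c<n" "M r c < K r c" using rP P_def by auto
    obtain r' where r': "r'<m" "r' \<noteq> r" "K r' c < M r' c" "\<forall>x<n. M r' x = M r x" "M r c = 1" "r' \<in> P"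
      using key[OF tM tK rows cols ns P_def rP mx c] by blast
    have "row_sum n M r' = row_sum n M r" unfolding row_sum_def using r'(4) by simp
    hence mx': "\<forall>x\<in>P. row_sum n M x \<le> row_sum n M r'" using mx by simp
    obtain c' where c': "c'<n" "M r' c' < K r' c'" using r'(6) P_def by auto
    obtain r'' where "M r' c' = 1"
      using key[OF tM tK rows cols ns P_def r'(6) mx' c'] by blast
    have cc: "c \<noteq> c'" using c' r'(3) by auto
    have rm: "r < m" using rP P_def by auto
    have "\<not>(M r c \<le> 1 \<and> M r' c' \<le> 1 \<and> 1 \<le> M r c' \<and> 1 \<le> M r' c)"
      using ns rm r'(1,2) c(1) c'(1) cc unfolding noswitch_def by metis
    moreover have "M r c' = 1" "M r' c = 1" using r'(4,5) c c' \<open>M r' c' = 1\<close> by auto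
    ultimately show False using r'(5) \<open>M r' c' = 1\<close> by simp
  qed
qed


lemma lonesum_ns:
  assumes L: "lonesum m n M"
  shows "noswitch m n M"
  unfolding noswitch_def
proof (intro allI impI notI)
  fix r r' c c'
  assume b: "r<m" "r'<m" "c<n" "c'<n" "r\<noteq>r'" "c\<noteq>c'"
    and H: "M r c \<le> 1 \<and> M r' c' \<le> 1 \<and> 1 \<le> M r c' \<and> 1 \<le> M r' c"
  have tM: "ternary m n M" using L unfolding lonesum_def by blast
  define g where "g = (\<lambda>j::nat. (if j = c then 1 else 0) - (if j = c' then 1 else 0) :: int)"
  define f where "f = (\<lambda>i::nat. (if i = r then 1 else 0) - (if i = r' then 1 else 0) :: int)"
  define K where "K = (\<lambda>i j. nat (int (M i j) + f i * g j))"
  have sg: "sum g {..<n} = 0" using b by (simp add: g_def sum_subtractf)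
  have sf: "sum f {..<m} = 0" using b by (simp add: f_def sum_subtractf)
  have Kint: "int (K i j) = int (M i j) + f i * g j" for i j
    using H b by (auto simp: K_def f_def g_def)
  have "ternary m n K" unfolding ternary_def
  proof (intro allI impI)
    fix i j assume ij: "i<m" "j<n"
    have "M i j \<in> {0,1,2}" using tM ij unfolding ternary_def by blast
    hence "int (K i j) \<le> 2" unfolding Kint using H b by (auto simp: f_def g_def)
    thus "K i j \<in> {0,1,2}" by auto
  qed
  moreover have "\<forall>i<m. row_sum n K i = row_sum n M i"
  proof (intro allI impI)
    fix i assume "i<m"
    have "int (row_sum n K i) = (\<Sum>j<n. int (M i j) + f i * g j)"
      unfolding row_sum_def of_nat_sum Kint ..
    also have "\<dots> = int (row_sum n M i)"
      by (simp add: sum.distrib row_sum_def sum_distrib_left[symmetric] sg)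
    finally show "row_sum n K i = row_sum n M i" by simp
  qed
  moreover have "\<forall>j<n. col_sum m K j = col_sum m M j"
  proof (intro allI impI)
    fix j assume "j<n"
    have "int (col_sum m K j) = (\<Sum>i<m. int (M i j) + f i * g j)"
      unfolding col_sum_def of_nat_sum Kint ..
    also have "\<dots> = int (col_sum m M j)"
      by (simp add: sum.distrib col_sum_def sum_distrib_right[symmetric] sf)
    finally show "col_sum m K j = col_sum m M j" by simp
  qed
  ultimately have "same_matrix m n K M" using L unfolding lonesum_def by blast
  hence "K r c = M r c" using b unfolding same_matrix_def by blast
  moreover have "int (K r c) = int (M r c) + 1" using Kint b by (simp add: f_def g_def)
  ultimately show False by simp
qed

definition good :: "nat \<Rightarrow> nat \<Rightarrow> nat \<Rightarrow> nat \<Rightarrow> bool" where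
  "good a b c d \<longleftrightarrow> \<not>(a\<le>1\<and>d\<le>1\<and>1\<le>b\<and>1\<le>c) \<and> \<not>(b\<le>1\<and>c\<le>1\<and>1\<le>a\<and>1\<le>d)"

definition allowed' :: "nat \<Rightarrow> nat \<Rightarrow> nat \<Rightarrow> nat \<Rightarrow> bool" where
  "allowed' a b c d \<longleftrightarrow> (a=2\<and>b=2\<and>c\<in>{0,1,2}\<and>d\<in>{0,1,2}) \<or> (a=2 \<and> c=2 \<and> b\<in>{0,1,2} \<and> d\<in>{0,1,2})
    \<or> (a=2\<and>d=0\<and>b\<in>{0,1,2}\<and>c\<in>{0,1,2}) \<or> (c=0\<and>d=0\<and>a\<in>{0,1,2}\<and>b\<in>{0,1,2})
    \<or> (b=0\<and>d=0\<and>a\<in>{0,1,2}\<and>c\<in>{0,1,2})"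

lemma all2: "(\<forall>i<(2::nat). P i) \<longleftrightarrow> P 0 \<and> P 1"
  using less_2_cases by auto

lemma sm2: "same_matrix 2 2 B (mat2 x y z w) \<longleftrightarrow> B 0 0 = x \<and> B 0 1 = y \<and> B 1 0 = z \<and> B 1 1 = w"
  by (simp add: same_matrix_def mat2_def all2)

lemma allowed_mat2: "allowed_form B \<longleftrightarrow> allowed' (B 0 0) (B 0 1) (B 1 0) (B 1 1)"
proof
  assume "allowed_form B"
  then obtain a b c d where "a \<in> {0,1,2}" "b \<in> {0,1,2}" "c \<in> {0,1,2}" "d \<in> {0,1,2}" and
    h: "same_matrix 2 2 B (mat2 2 2 c d) \<or> same_matrix 2 2 B (mat2 2 b 2 d) \<or>
      same_matrix 2 2 B (mat2 2 b c 0) \<or> same_matrix 2 2 B (mat2 a b 0 0) \<or>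
      same_matrix 2 2 B (mat2 a 0 c 0)" unfolding allowed_form_def by blast
  thus "allowed' (B 0 0) (B 0 1) (B 1 0) (B 1 1)" unfolding sm2 allowed'_def by (elim disjE) simp_all
next
  assume h: "allowed' (B 0 0) (B 0 1) (B 1 0) (B 1 1)"
  show "allowed_form B" unfolding allowed_form_def sm2
    apply (rule exI[of _ "B 0 0"], rule exI[of _ "B 0 1"], rule exI[of _ "B 1 0"], rule exI[of _ "B 1 1"])
    using h unfolding allowed'_def by auto
qed
lemma perm2:
  assumes p: "\<sigma> permutes {..<2::nat}"
  shows "(\<sigma> 0 = 0 \<and> \<sigma> 1 = 1) \<or> (\<sigma> 0 = 1 \<and> \<sigma> 1 = 0)"
proof -
  have "\<sigma> 0 < 2" "\<sigma> 1 < 2" using permutes_in_image[OF p] by auto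
  moreover have "\<sigma> 0 \<noteq> \<sigma> 1" using permutes_inj[OF p] by (metis inj_eq zero_neq_one)
  ultimately show ?thesis using less_2_cases by (metis One_nat_def)
qed

lemma equiv_iff:
  "(\<exists>B. mat_equiv 2 2 A B \<and> allowed_form B) \<longleftrightarrow>
   allowed' (A 0 0) (A 0 1) (A 1 0) (A 1 1) \<or> allowed' (A 1 0) (A 1 1) (A 0 0) (A 0 1) \<or>
   allowed' (A 0 1) (A 0 0) (A 1 1) (A 1 0) \<or> allowed' (A 1 1) (A 1 0) (A 0 1) (A 0 0)"
  (is "?L \<longleftrightarrow> ?R")
proof
  assume ?L
  then obtain B \<sigma> \<tau> where p: "\<sigma> permutes {..<2}" "\<tau> permutes {..<2}"
    and Be: "\<forall>i<2. \<forall>j<2. B i j = A (\<sigma> i) (\<tau> j)" and al: "allowed_form B"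
    unfolding mat_equiv_def by blast
  have al': "allowed' (A (\<sigma> 0) (\<tau> 0)) (A (\<sigma> 0) (\<tau> 1)) (A (\<sigma> 1) (\<tau> 0)) (A (\<sigma> 1) (\<tau> 1))"
    using al Be unfolding allowed_mat2 all2 by simp
  show ?R using perm2[OF p(1)] perm2[OF p(2)] al' by auto
next
  have id2: "id permutes {..<2::nat}" by (rule permutes_id)
  have sw: "transpose 0 1 permutes {..<2::nat}" by (rule permutes_swap_id) auto
  have gen: "mat_equiv 2 2 A (\<lambda>i j. A (\<sigma> i) (\<tau> j))" if "\<sigma> permutes {..<2}" "\<tau> permutes {..<2}" for \<sigma> \<tau>
    unfolding mat_equiv_def using that by blast
  assume ?R
  then consider (a) "allowed' (A 0 0) (A 0 1) (A 1 0) (A 1 1)" | (b) "allowed' (A 1 0) (A 1 1) (A 0 0) (A 0 1)"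
    | (c) "allowed' (A 0 1) (A 0 0) (A 1 1) (A 1 0)" | (d) "allowed' (A 1 1) (A 1 0) (A 0 1) (A 0 0)" by blast
  thus ?L
  proof cases
    case a thus ?thesis using gen[OF id2 id2] unfolding allowed_mat2 by (intro exI[of _ "\<lambda>i j. A (id i) (id j)"]) simp
  next
    case b thus ?thesis using gen[OF sw id2] unfolding allowed_mat2 by (intro exI[of _ "\<lambda>i j. A (transpose 0 1 i) (id j)"]) simp
  next
    case c thus ?thesis using gen[OF id2 sw] unfolding allowed_mat2 by (intro exI[of _ "\<lambda>i j. A (id i) (transpose 0 1 j)"]) simp
  next
    case d thus ?thesis using gen[OF sw sw] unfolding allowed_mat2 by (intro exI[of _ "\<lambda>i j. A (transpose 0 1 i) (transpose 0 1 j)"]) simp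
  qed
qed

lemma quad:
  assumes "a \<in> {0,1,2}" "b \<in> {0,1,2}" "c \<in> {0,1,2}" "d \<in> {0,1,2}"
  shows "(allowed' a b c d \<or> allowed' c d a b \<or> allowed' b a d c \<or> allowed' d c b a) \<longleftrightarrow> good a b c d"
proof -
  have "a = 0 \<or> a = 1 \<or> a = 2" "b = 0 \<or> b = 1 \<or> b = 2" "c = 0 \<or> c = 1 \<or> c = 2" "d = 0 \<or> d = 1 \<or> d = 2"
    using assms by auto
  thus ?thesis unfolding allowed'_def good_def by (elim disjE; simp)
qed


lemma ns_iff: "noswitch m n M \<longleftrightarrow> (\<forall>i1 i2 j1 j2. i1 < i2 \<and> i2 < m \<and> j1 < j2 \<and> j2 < n \<longrightarrow>
     good (M i1 j1) (M i1 j2) (M i2 j1) (M i2 j2))"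
proof
  assume ns: "noswitch m n M"
  show "\<forall>i1 i2 j1 j2. i1 < i2 \<and> i2 < m \<and> j1 < j2 \<and> j2 < n \<longrightarrow> good (M i1 j1) (M i1 j2) (M i2 j1) (M i2 j2)"
  proof (intro allI impI)
    fix i1 i2 j1 j2 assume h: "i1 < i2 \<and> i2 < m \<and> j1 < j2 \<and> j2 < n"
    have "\<not>(M i1 j1 \<le> 1 \<and> M i2 j2 \<le> 1 \<and> 1 \<le> M i1 j2 \<and> 1 \<le> M i2 j1)"
      using ns h unfolding noswitch_def by (metis less_trans nat_neq_iff)
    moreover have "\<not>(M i1 j2 \<le> 1 \<and> M i2 j1 \<le> 1 \<and> 1 \<le> M i1 j1 \<and> 1 \<le> M i2 j2)"
      using ns h unfolding noswitch_def by (metis less_trans nat_neq_iff)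
    ultimately show "good (M i1 j1) (M i1 j2) (M i2 j1) (M i2 j2)" unfolding good_def by blast
  qed
next
  assume G: "\<forall>i1 i2 j1 j2. i1 < i2 \<and> i2 < m \<and> j1 < j2 \<and> j2 < n \<longrightarrow> good (M i1 j1) (M i1 j2) (M i2 j1) (M i2 j2)"
  show "noswitch m n M" unfolding noswitch_def
  proof (intro allI impI notI)
    fix r r' c c' assume b: "r<m" "r'<m" "c<n" "c'<n" "r\<noteq>r'" "c\<noteq>c'"
      and H: "M r c \<le> 1 \<and> M r' c' \<le> 1 \<and> 1 \<le> M r c' \<and> 1 \<le> M r' c"
    consider "r < r'" "c < c'" | "r < r'" "c' < c" | "r' < r" "c < c'" | "r' < r" "c' < c"
      using b by (meson nat_neq_iff)
    thus False
    proof cases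
      case 1 thus ?thesis using G[rule_format, of r r' c c'] b H unfolding good_def by auto
    next
      case 2 thus ?thesis using G[rule_format, of r r' c' c] b H unfolding good_def by auto
    next
      case 3 thus ?thesis using G[rule_format, of r' r c c'] b H unfolding good_def by auto
    next
      case 4 thus ?thesis using G[rule_format, of r' r c' c] b H unfolding good_def by auto
    qed
  qed
qed

theorem theorem3p1:
  fixes m n :: nat and M :: "nat \<Rightarrow> nat \<Rightarrow> nat"
  assumes "ternary m n M"
  shows "lonesum m n M \<longleftrightarrow>
    (\<forall>i1 i2 j1 j2. i1 < i2 \<and> i2 < m \<and> j1 < j2 \<and> j2 < n \<longrightarrow>
       (\<exists>B. mat_equiv 2 2 (submat2 M i1 i2 j1 j2) B \<and> allowed_form B))"
proof -
  have loc: "(\<exists>B. mat_equiv 2 2 (submat2 M i1 i2 j1 j2) B \<and> allowed_form B) \<longleftrightarrow>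
     good (M i1 j1) (M i1 j2) (M i2 j1) (M i2 j2)" if h: "i1 < i2 \<and> i2 < m \<and> j1 < j2 \<and> j2 < n" for i1 i2 j1 j2
  proof -
    have t: "M i1 j1 \<in> {0,1,2}" "M i1 j2 \<in> {0,1,2}" "M i2 j1 \<in> {0,1,2}" "M i2 j2 \<in> {0,1,2}"
      using assms h unfolding ternary_def by (meson less_trans)+
    show ?thesis unfolding equiv_iff using quad[OF t] by (simp add: submat2_def)
  qed
  have "lonesum m n M \<longleftrightarrow> noswitch m n M" using assms ns_lonesum lonesum_ns by blast
  also have "\<dots> \<longleftrightarrow> (\<forall>i1 i2 j1 j2. i1 < i2 \<and> i2 < m \<and> j1 < j2 \<and> j2 < n \<longrightarrow>
       (\<exists>B. mat_equiv 2 2 (submat2 M i1 i2 j1 j2) B \<and> allowed_form B))"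
    unfolding ns_iff using loc by blast
  finally show ?thesis .
qed

end
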